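(* Let $\mathcal{S}$ be a normal SPN over Boolean variables $X_1,\ldots,X_N$ and let $\mathcal{B}$ be the Bayesian network with ADD CPDs constructed from $\mathcal{S}$ as described in the context. Then $|\mathcal{B}|=O(N|\mathcal{S}|)$.
   Context: SPNs. Let $X_1,\ldots,X_N$ be Boolean variables. An SPN is a finite rooted DAG whose internal nodes are sum and product nodes, each edge $(v,u)$ out of a sum node carrying a weight $w_{v,u}\ge 0$, and whose terminal nodes are indicators $\mathbb{I}_{x_n},\mathbb{I}_{\bar x_n}$ or univariate distribution nodes over some $X_n$ with parameter $p\in[0,1]$. The scope of a terminal node over $X_n$ is $\{X_n\}$; an internal node's scope is the union of its children's scopes. The SPN is over $X_1,\ldots,X_N$ if the root's scope is $\{X_1,\ldots,X_N\}$. It is normal if (1) it is complete (children of each sum node have equal scopes) and decomposable (children of each product node have pairwise disjoint scopes); (2) the weights leaving each sum node are nonnegative and sum to 1; (3) every terminal node is a univariate distribution node and every sum node has scope size at least 2. $|\mathcal{S}|$ is the number of nodes plus edges. Construction. From a normal SPN $\mathcal{S}$ over $X_1,\ldots,X_N$ build a Bayesian network $\mathcal{B}$: its variables are $X_1,\ldots,X_N$ and, for each sum node $v$ with children $u_1,\ldots,u_l$, a hidden variable $H_v$ with values $\{1,\ldots,l\}$; its edges are exactly $H_v\to X$ for each sum node $v$ and each $X\in\mathrm{scope}(v)$. The CPD of $H_v$ is the decision stump ADD $\mathcal{A}_{H_v}$ (root labelled $H_v$, $i$-th edge to a terminal with value $w_{v,u_i}$). The CPD of $X$ is the ADD $\mathcal{A}_X$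 obtained by taking the subgraph of $\mathcal{S}$ induced by the nodes whose scope contains $X$, contracting every product node (each has a unique child there; connect its parents to that child and delete it), turning each sum node $v$ into an ADD node labelled $H_v$ whose $i$-th out-edge goes to the image of its $i$-th child, and keeping each terminal node (a distribution over $X$) as an ADD terminal. The size $|\mathcal{B}|$ is the number of nodes plus edges of the DAG of $\mathcal{B}$ plus the sizes (nodes plus edges) of all ADDs $\mathcal{A}_{H_v}$ and $\mathcal{A}_X$. *)

theory Defs
  imports Complex_Main
begin

(* Terminal nodes: indicators I_{x_n} (Ind n True),
   I_{\bar x_n} (Ind n False), or univariate (Bernoulli) distribution nodes
   over X_n with parameter p (Dist n p). Variables are X_1..X_N, indexed 1..N. *)
datatype node_kind = SumN | ProdN | Ind nat bool | Dist nat real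

(* An SPN: nodes are natural numbers; ch v is the ordered list of children
   (the i-th child of a sum node v is ch v ! i); wt v u is the weight of
   the edge (v,u) out of a sum node. *)
record spn =
  nodes :: "nat set"
  root  :: nat
  kind  :: "nat \<Rightarrow> node_kind"
  ch    :: "nat \<Rightarrow> nat list"
  wt    :: "nat \<Rightarrow> nat \<Rightarrow> real"

definition spn_edges :: "spn \<Rightarrow> (nat \<times> nat) set" where
  "spn_edges S = {(v,u). v \<in> nodes S \<and> u \<in> set (ch S v)}"

definition is_internal :: "spn \<Rightarrow> nat \<Rightarrow> bool" where
  "is_internal S v \<longleftrightarrow> kind S v = SumN \<or> kind S v = ProdN"

definition spn_wf :: "spn \<Rightarrow> bool" where
  "spn_wf S \<longleftrightarrow>
     finite (nodes S) \<and> root S \<in> nodes S \<and>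
     (\<forall>v\<in>nodes S. set (ch S v) \<subseteq> nodes S \<and> distinct (ch S v)) \<and>
     acyclic (spn_edges S) \<and>
     (\<forall>v\<in>nodes S. (root S, v) \<in> (spn_edges S)\<^sup>*) \<and>
     (\<forall>v\<in>nodes S. \<not> is_internal S v \<longrightarrow> ch S v = []) \<and>
     (\<forall>v\<in>nodes S. \<forall>n p. kind S v = Dist n p \<longrightarrow> 0 \<le> p \<and> p \<le> 1)"

inductive in_scope :: "spn \<Rightarrow> nat \<Rightarrow> nat \<Rightarrow> bool" for S where
  ind:  "v \<in> nodes S \<Longrightarrow> kind S v = Ind n b \<Longrightarrow> in_scope S v n"
| dist: "v \<in> nodes S \<Longrightarrow> kind S v = Dist n p \<Longrightarrow> in_scope S v n"
| inner: "v \<in> nodes S \<Longrightarrow> is_internal S v \<Longrightarrow> u \<in> set (ch S v) \<Longrightarrow>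
          in_scope S u n \<Longrightarrow> in_scope S v n"

definition scope :: "spn \<Rightarrow> nat \<Rightarrow> nat set" where
  "scope S v = {n. in_scope S v n}"

definition spn_over :: "nat \<Rightarrow> spn \<Rightarrow> bool" where
  "spn_over N S \<longleftrightarrow> spn_wf S \<and> scope S (root S) = {1..N}"

definition complete :: "spn \<Rightarrow> bool" where
  "complete S \<longleftrightarrow> (\<forall>v\<in>nodes S. kind S v = SumN \<longrightarrow>
      (\<forall>u\<in>set (ch S v). \<forall>u'\<in>set (ch S v). scope S u = scope S u'))"

definition decomposable :: "spn \<Rightarrow> bool" where
  "decomposable S \<longleftrightarrow> (\<forall>v\<in>nodes S. kind S v = ProdN \<longrightarrow>
      (\<forall>i j. i < length (ch S v) \<and> j < length (ch S v) \<and> i \<noteq> j \<longrightarrow>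
         scope S (ch S v ! i) \<inter> scope S (ch S v ! j) = {}))"

definition normal_spn :: "nat \<Rightarrow> spn \<Rightarrow> bool" where
  "normal_spn N S \<longleftrightarrow> spn_over N S \<and> complete S \<and> decomposable S \<and>
     (\<forall>v\<in>nodes S. kind S v = SumN \<longrightarrow>
        (\<forall>u\<in>set (ch S v). 0 \<le> wt S v u) \<and> (\<Sum>u\<in>set (ch S v). wt S v u) = 1) \<and>
     (\<forall>v\<in>nodes S. \<not> is_internal S v \<longrightarrow> (\<exists>n p. kind S v = Dist n p)) \<and>
     (\<forall>v\<in>nodes S. kind S v = SumN \<longrightarrow> card (scope S v) \<ge> 2)"

definition spn_size :: "spn \<Rightarrow> nat" where
  "spn_size S = card (nodes S) + card (spn_edges S)"

(* Algebraic decision diagrams as graphs: a node set and a set of labelled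
   edges (a, i, b) meaning "the i-th out-edge of a goes to b". *)
record 'n add =
  add_nodes :: "'n set"
  add_edges :: "('n \<times> nat \<times> 'n) set"

definition add_size :: "'n add \<Rightarrow> nat" where
  "add_size A = card (add_nodes A) + card (add_edges A)"

(* Decision stump CPD of H_v: root (None) with i-th edge to terminal Some i
   (carrying the value w_{v,u_i}); one terminal per child. *)
definition stump_add :: "spn \<Rightarrow> nat \<Rightarrow> nat option add" where
  "stump_add S v = \<lparr> add_nodes = insert None (Some ` {..<length (ch S v)}),
                     add_edges = {(None, i, Some i) | i. i < length (ch S v)} \<rparr>"

definition nodes_with :: "spn \<Rightarrow> nat \<Rightarrow> nat set" where
  "nodes_with S n = {u \<in> nodes S. n \<in> scope S u}"

(* contr S n u w : in the subgraph induced by nodes_with S n, w is the image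
   of u under contraction of product nodes (follow the unique child in the
   subgraph through product nodes until reaching a non-product node). *)
inductive contr :: "spn \<Rightarrow> nat \<Rightarrow> nat \<Rightarrow> nat \<Rightarrow> bool" for S n where
  stop: "u \<in> nodes_with S n \<Longrightarrow> kind S u \<noteq> ProdN \<Longrightarrow> contr S n u u"
| step: "u \<in> nodes_with S n \<Longrightarrow> kind S u = ProdN \<Longrightarrow> u' \<in> set (ch S u) \<Longrightarrow>
         u' \<in> nodes_with S n \<Longrightarrow> contr S n u' w \<Longrightarrow> contr S n u w"

definition var_add :: "spn \<Rightarrow> nat \<Rightarrow> nat add" where
  "var_add S n = \<lparr> add_nodes = {u \<in> nodes_with S n. kind S u \<noteq> ProdN},
      add_edges = {(v, i, w) | v i w. v \<in> nodes_with S n \<and> kind S v = SumN \<and>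
                    i < length (ch S v) \<and> contr S n (ch S v ! i) w} \<rparr>"

definition sum_nodes :: "spn \<Rightarrow> nat set" where
  "sum_nodes S = {v \<in> nodes S. kind S v = SumN}"

(* DAG of the Bayesian network: Inl n is X_n (1 \<le> n \<le> N), Inr v is H_v;
   edges H_v \<rightarrow> X for X in scope(v). *)
definition bn_dag_nodes :: "nat \<Rightarrow> spn \<Rightarrow> (nat + nat) set" where
  "bn_dag_nodes N S = Inl ` {1..N} \<union> Inr ` sum_nodes S"

definition bn_dag_edges :: "spn \<Rightarrow> ((nat + nat) \<times> (nat + nat)) set" where
  "bn_dag_edges S = {(Inr v, Inl n) | v n. v \<in> sum_nodes S \<and> n \<in> scope S v}"

definition bn_size :: "nat \<Rightarrow> spn \<Rightarrow> nat" where
  "bn_size N S = card (bn_dag_nodes N S) + card (bn_dag_edges S)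
     + (\<Sum>v\<in>sum_nodes S. add_size (stump_add S v))
     + (\<Sum>n\<in>{1..N}. add_size (var_add S n))"

end

theory Submission
  imports Defs
begin

lemma wf_fin: "spn_wf S \<Longrightarrow> finite (nodes S)"
  unfolding spn_wf_def by (elim conjE)
lemma wf_dist: "spn_wf S \<Longrightarrow> v \<in> nodes S \<Longrightarrow> distinct (ch S v)"
  unfolding spn_wf_def by (elim conjE) blast
lemma wf_leaf: "spn_wf S \<Longrightarrow> v \<in> nodes S \<Longrightarrow> \<not> is_internal S v \<Longrightarrow> ch S v = []"
  unfolding spn_wf_def by (elim conjE) blast
lemma wf_reach: "spn_wf S \<Longrightarrow> v \<in> nodes S \<Longrightarrow> (root S, v) \<in> (spn_edges S)\<^sup>*"
  unfolding spn_wf_def by (elim conjE) blast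

lemma edges_Sigma: "spn_edges S = Sigma (nodes S) (\<lambda>v. set (ch S v))"
  unfolding spn_edges_def by auto

lemma card_edges:
  assumes "spn_wf S"
  shows "card (spn_edges S) = (\<Sum>v\<in>nodes S. length (ch S v))"
proof -
  have f: "finite (nodes S)" using wf_fin[OF assms] .
  have "card (spn_edges S) = (\<Sum>v\<in>nodes S. card (set (ch S v)))"
    unfolding edges_Sigma by (rule card_SigmaI[OF f]) auto
  also have "\<dots> = (\<Sum>v\<in>nodes S. length (ch S v))"
    using wf_dist[OF assms] by (intro sum.cong) (auto simp: distinct_card)
  finally show ?thesis .
qed

lemma scope_step:
  assumes wf: "spn_wf S" and e: "(a, b) \<in> spn_edges S" and s: "in_scope S b n"
  shows "in_scope S a n"
proof -
  have a: "a \<in> nodes S" and b: "b \<in> set (ch S a)" using e by (simp_all add: spn_edges_def)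
  have "is_internal S a"
  proof (rule ccontr)
    assume "\<not> is_internal S a"
    then have "ch S a = []" by (rule wf_leaf[OF wf a])
    then show False using b by simp
  qed
  then show ?thesis by (rule in_scope.inner[OF a _ b s])
qed

lemma scope_up:
  assumes wf: "spn_wf S" and r: "(a, v) \<in> (spn_edges S)\<^sup>*" and s: "in_scope S v n"
  shows "in_scope S a n"
  using r s
proof (induction rule: converse_rtrancl_induct)
  case base then show ?case .
next
  case (step a b)
  then have "in_scope S b n" by blast
  then show ?case by (rule scope_step[OF wf step(1)])
qed

lemma scope_sub:
  assumes "spn_over N S" "v \<in> nodes S"
  shows "scope S v \<subseteq> {1..N}"
proof
  fix n assume "n \<in> scope S v"
  moreover have wf: "spn_wf S" using assms(1) by (simp add: spn_over_def)
  ultimately have "in_scope S (root S) n"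
    using scope_up[OF wf wf_reach[OF wf assms(2)]] by (simp add: scope_def)
  moreover have "scope S (root S) = {1..N}" using assms(1) by (simp add: spn_over_def)
  moreover have "n \<in> scope S (root S)" using calculation(1) by (simp add: scope_def)
  ultimately show "n \<in> {1..N}" by simp
qed

definition lab :: "node_kind \<Rightarrow> nat" where
  "lab k = (case k of Ind n b \<Rightarrow> n | Dist n p \<Rightarrow> n | _ \<Rightarrow> 0)"

lemma scope_leaf: "in_scope S v n \<Longrightarrow> n \<in> (\<lambda>u. lab (kind S u)) ` nodes S"
  by (induction rule: in_scope.induct) (force simp: lab_def)+

lemma N_le:
  assumes "spn_over N S" shows "N \<le> card (nodes S)"
proof -
  have f: "finite (nodes S)" using assms wf_fin by (simp add: spn_over_def)
  have eq: "scope S (root S) = {1..N}" using assms by (simp add: spn_over_def)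
  have "{1..N} \<subseteq> (\<lambda>u. lab (kind S u)) ` nodes S"
  proof
    fix n assume "n \<in> {1..N}"
    then have "n \<in> scope S (root S)" using eq by simp
    then have "in_scope S (root S) n" by (simp add: scope_def)
    then show "n \<in> (\<lambda>u. lab (kind S u)) ` nodes S" by (rule scope_leaf)
  qed
  then have "card {1..N} \<le> card ((\<lambda>u. lab (kind S u)) ` nodes S)"
    using f by (intro card_mono) auto
  also have "\<dots> \<le> card (nodes S)" by (rule card_image_le[OF f])
  finally show ?thesis by simp
qed

lemma contr_unique:
  assumes dec: "decomposable S"
  shows "contr S n u w \<Longrightarrow> contr S n u w' \<Longrightarrow> w' = w"
proof (induction arbitrary: w' rule: contr.induct)
  case (stop u)
  have np: "kind S u \<noteq> ProdN" by fact
  from stop.prems show ?case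
  proof (cases rule: contr.cases)
    case stop then show ?thesis by simp
  next
    case (step u') then show ?thesis using np by simp
  qed
next
  case (step u u' w)
  from step.prems show ?case
  proof (cases rule: contr.cases)
    case stop then show ?thesis using step.hyps(2) by simp
  next
    case (step u'')
    have "u'' = u'"
    proof (rule ccontr)
      assume ne: "u'' \<noteq> u'"
      obtain i where i: "i < length (ch S u)" "ch S u ! i = u'"
        using \<open>u' \<in> set (ch S u)\<close> by (auto simp: in_set_conv_nth)
      obtain j where j: "j < length (ch S u)" "ch S u ! j = u''"
        using \<open>u'' \<in> set (ch S u)\<close> by (auto simp: in_set_conv_nth)
      have "i \<noteq> j" using i j ne by auto
      have "u \<in> nodes S" using \<open>u \<in> nodes_with S n\<close> by (simp add: nodes_with_def)
      then have D: "\<forall>i j. i < length (ch S u) \<and> j < length (ch S u) \<and> i \<noteq> j \<longrightarrow>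
         scope S (ch S u ! i) \<inter> scope S (ch S u ! j) = {}"
        using bspec[OF dec[unfolded decomposable_def]] step.hyps(2) by blast
      have "scope S (ch S u ! i) \<inter> scope S (ch S u ! j) = {}"
        using D[rule_format, OF conjI[OF i(1) conjI[OF j(1) \<open>i \<noteq> j\<close>]]] .
      then have "scope S u' \<inter> scope S u'' = {}"
        using i(2) j(2) by simp
      moreover have "n \<in> scope S u'" "n \<in> scope S u''"
        using \<open>u' \<in> nodes_with S n\<close> \<open>u'' \<in> nodes_with S n\<close> by (auto simp: nodes_with_def)
      ultimately show False by blast
    qed
    then have "contr S n u' w'" using \<open>contr S n u'' w'\<close> by simp
    then show ?thesis by (rule step.IH)
  qed
qed

lemma contr_nodes: "contr S n u w \<Longrightarrow> w \<in> nodes S"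
  by (induction rule: contr.induct) (auto simp: nodes_with_def)

lemma var_add_size:
  assumes "normal_spn N S"
  shows "add_size (var_add S n) \<le> spn_size S"
proof -
  have wf: "spn_wf S" and dec: "decomposable S"
    using assms by (auto simp: normal_spn_def spn_over_def)
  have f: "finite (nodes S)" using wf_fin[OF wf] .
  let ?I = "Sigma (nodes S) (\<lambda>v. {..<length (ch S v)})"
  let ?g = "\<lambda>(v,i). (v, i, THE w. contr S n (ch S v ! i) w)"
  have "add_edges (var_add S n) \<subseteq> ?g ` ?I"
  proof
    fix x assume "x \<in> add_edges (var_add S n)"
    then obtain v i w where x: "x = (v,i,w)" "v \<in> nodes_with S n" "i < length (ch S v)"
      "contr S n (ch S v ! i) w" by (auto simp: var_add_def)
    have "(THE w. contr S n (ch S v ! i) w) = w"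
      using x(4) contr_unique[OF dec] by blast
    then show "x \<in> ?g ` ?I" using x by (force simp: nodes_with_def)
  qed
  moreover have "finite ?I" using f by auto
  ultimately have "card (add_edges (var_add S n)) \<le> card (?g ` ?I)"
    by (intro card_mono) auto
  also have "\<dots> \<le> card ?I" by (rule card_image_le) (use f in auto)
  also have "card ?I = (\<Sum>v\<in>nodes S. length (ch S v))" using f by simp
  also have "\<dots> = card (spn_edges S)" using card_edges[OF wf] by simp
  finally have e: "card (add_edges (var_add S n)) \<le> card (spn_edges S)" .
  have "card (add_nodes (var_add S n)) \<le> card (nodes S)"
    using f by (intro card_mono) (auto simp: var_add_def nodes_with_def)
  with e show ?thesis by (simp add: add_size_def spn_size_def)
qed

lemma stump_size: "add_size (stump_add S v) \<le> 1 + 2 * length (ch S v)"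
proof -
  have a: "card (insert None (Some ` {..<length (ch S v)})) \<le> Suc (card (Some ` {..<length (ch S v)}))"
    by (simp add: card_insert_if)
  have b: "card (Some ` {..<length (ch S v)}) \<le> length (ch S v)"
    using card_image_le[of "{..<length (ch S v)}" Some] by simp
  have c: "{(None, i, Some i) | i. i < length (ch S v)} = (\<lambda>i. (None, i, Some i)) ` {..<length (ch S v)}"
    by auto
  have d: "card {(None::nat option, i, Some i) | i. i < length (ch S v)} \<le> length (ch S v)"
    unfolding c using card_image_le[of "{..<length (ch S v)}" "\<lambda>i. (None::nat option, i, Some i)"] by simp
  show ?thesis using a b d by (simp add: add_size_def stump_add_def)
qed

theorem theorem5:
  shows "\<exists>c::real. \<forall>(N::nat) (S::spn). normal_spn N S \<longrightarrow>
           real (bn_size N S) \<le> c * real N * real (spn_size S)"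
proof (intro exI[of _ 6] allI impI)
  fix N S assume ns: "normal_spn N S"
  have ov: "spn_over N S" and wf: "spn_wf S" using ns by (auto simp: normal_spn_def spn_over_def)
  have f: "finite (nodes S)" using wf_fin[OF wf] .
  have sn_sub: "sum_nodes S \<subseteq> nodes S" by (auto simp: sum_nodes_def)
  have fs: "finite (sum_nodes S)" using f sn_sub finite_subset by blast
  have sc: "\<And>v. v \<in> sum_nodes S \<Longrightarrow> scope S v \<subseteq> {1..N}"
    using scope_sub[OF ov] by (auto simp: sum_nodes_def)
  have card2: "\<And>v. v \<in> sum_nodes S \<Longrightarrow> card (scope S v) \<ge> 2"
    using ns by (auto simp: normal_spn_def sum_nodes_def)
  let ?n = "card (nodes S)" and ?e = "card (spn_edges S)"
  show "real (bn_size N S) \<le> 6 * real N * real (spn_size S)"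
  proof (cases "N = 0")
    case True
    have "sum_nodes S = {}"
    proof (rule ccontr)
      assume "sum_nodes S \<noteq> {}"
      then obtain v where v: "v \<in> sum_nodes S" by blast
      have "scope S v = {}" using sc[OF v] True by auto
      with card2[OF v] show False by simp
    qed
    then show ?thesis using True
      by (simp add: bn_size_def bn_dag_nodes_def bn_dag_edges_def)
  next
    case False
    have N1: "N \<ge> 1" using False by simp
    have NL: "N \<le> ?n" by (rule N_le[OF ov])
    have csn: "card (sum_nodes S) \<le> ?n" using card_mono[OF f sn_sub] .
    have t1: "card (bn_dag_nodes N S) \<le> N + ?n"
    proof -
      have "card (bn_dag_nodes N S) \<le> card (Inl ` {1..N} :: (nat+nat) set) + card (Inr ` sum_nodes S :: (nat+nat) set)"
        unfolding bn_dag_nodes_def by (rule card_Un_le)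
      also have "\<dots> \<le> N + card (sum_nodes S)"
        using card_image_le[of "{1..N}" "Inl :: nat \<Rightarrow> nat+nat"]
              card_image_le[OF fs, of "Inr :: nat \<Rightarrow> nat+nat"] by simp
      finally show ?thesis using csn by simp
    qed
    have t2: "card (bn_dag_edges S) \<le> ?n * N"
    proof -
      have "bn_dag_edges S \<subseteq> (\<lambda>(v,n). (Inr v, Inl n)) ` (sum_nodes S \<times> {1..N})"
        unfolding bn_dag_edges_def using sc by (fastforce intro: rev_image_eqI)
      then have "card (bn_dag_edges S) \<le> card ((\<lambda>(v,n). (Inr v, Inl n)) ` (sum_nodes S \<times> {1..N}) :: ((nat+nat)\<times>(nat+nat)) set)"
        using fs by (intro card_mono) auto
      also have "\<dots> \<le> card (sum_nodes S \<times> {1..N})" by (rule card_image_le) (use fs in auto)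
      also have "\<dots> = card (sum_nodes S) * N" by (simp add: card_cartesian_product)
      also have "\<dots> \<le> ?n * N" using csn by simp
      finally show ?thesis .
    qed
    have t3: "(\<Sum>v\<in>sum_nodes S. add_size (stump_add S v)) \<le> ?n + 2 * ?e"
    proof -
      have "(\<Sum>v\<in>sum_nodes S. add_size (stump_add S v)) \<le> (\<Sum>v\<in>sum_nodes S. 1 + 2 * length (ch S v))"
        by (rule sum_mono) (rule stump_size)
      also have "\<dots> \<le> (\<Sum>v\<in>nodes S. 1 + 2 * length (ch S v))"
        by (rule sum_mono2[OF f sn_sub]) auto
      also have "\<dots> = ?n + 2 * (\<Sum>v\<in>nodes S. length (ch S v))"
        by (subst sum.distrib) (simp add: sum_distrib_left)
      also have "\<dots> = ?n + 2 * ?e" using card_edges[OF wf] by simp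
      finally show ?thesis .
    qed
    have t4: "(\<Sum>n\<in>{1..N}. add_size (var_add S n)) \<le> N * spn_size S"
    proof -
      have "(\<Sum>n\<in>{1..N}. add_size (var_add S n)) \<le> (\<Sum>n\<in>{1..N}. spn_size S)"
        by (rule sum_mono) (rule var_add_size[OF ns])
      then show ?thesis by simp
    qed
    have s: "spn_size S = ?n + ?e" by (simp add: spn_size_def)
    have "bn_size N S \<le> (N + ?n) + ?n * N + (?n + 2 * ?e) + N * spn_size S"
      using t1 t2 t3 t4 unfolding bn_size_def by linarith
    also have "\<dots> \<le> 6 * N * spn_size S"
    proof -
      define P where "P = N * spn_size S"
      have ss: "spn_size S \<le> P" using N1 unfolding P_def by simp
      have a: "N + ?n \<le> 2 * P" using NL s ss by simp
      have b: "?n * N \<le> P" using s unfolding P_def by simp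
      have c: "?n + 2 * ?e \<le> 2 * P" using s ss by simp
      have d: "6 * N * spn_size S = 6 * P" unfolding P_def by simp
      show ?thesis unfolding d P_def[symmetric] using a b c by linarith
    qed
    finally have "bn_size N S \<le> 6 * N * spn_size S" .
    then have "real (bn_size N S) \<le> real (6 * N * spn_size S)" by linarith
    then show ?thesis by simp
  qed
qed

end
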